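(* Let $d,k$ be positive integers and $r$ a positive real number. Let $L_d(r)=\{v\in\mathbb{Z}^d:\|v\|_2\le r,\ v_i>0 \text{ for } 1\le i\le d\}$ and $L_{d,k}(r)=\{v\in\mathbb{Z}^d:\|v\|_2\le r,\ v_i>0 \text{ and } k\nmid v_i \text{ for }1\le i\le d\}$. Then $k^d|L_{d,k}(r)|\ge (k-1)^d|L_d(r)|$.
   Context: $\|\cdot\|_2$ is the Euclidean norm. *)

theory Defs
  imports Complex_Main
begin

(* Vectors in Z^d are represented as integer lists of length d;
   coordinate i (1 <= i <= d) is v ! (i-1). *)

definition eucl_norm :: "int list \<Rightarrow> real" where
  "eucl_norm v = sqrt (\<Sum>i<length v. (real_of_int (v ! i))\<^sup>2)"

definition L :: "nat \<Rightarrow> real \<Rightarrow> int list set" where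
  "L d r = {v. length v = d \<and> eucl_norm v \<le> r \<and> (\<forall>i<d. v ! i > 0)}"

definition Lk :: "nat \<Rightarrow> nat \<Rightarrow> real \<Rightarrow> int list set" where
  "Lk d k r = {v. length v = d \<and> eucl_norm v \<le> r \<and>
                  (\<forall>i<d. v ! i > 0 \<and> \<not> (int k dvd v ! i))}"

end

theory Submission
  imports Defs
begin

definition fy :: "nat \<Rightarrow> int \<Rightarrow> nat \<Rightarrow> int" where
  "fy k x a = (if int k dvd x then x - int k + int a + 1 else x)"
definition fb :: "nat \<Rightarrow> int \<Rightarrow> nat \<Rightarrow> nat" where
  "fb k x a = (if int k dvd x then k - 1 else a)"

lemma fy_props:
  assumes "x > 0" "a < k - 1"
  shows "0 < fy k x a" "fy k x a \<le> x" "\<not> int k dvd fy k x a" "fb k x a < k"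
proof -
  show "fb k x a < k" using assms by (auto simp: fb_def)
  show "0 < fy k x a" "fy k x a \<le> x"
  proof -
    have "0 < fy k x a \<and> fy k x a \<le> x"
    proof (cases "int k dvd x")
      case True
      then obtain p where p: "x = int k * p" by blast
      with assms have "p > 0" by (simp add: zero_less_mult_iff)
      hence "int k * 1 \<le> int k * p" by (intro mult_left_mono) auto
      hence "int k * p \<ge> int k" by simp
      then show ?thesis using True p assms by (auto simp: fy_def)
    qed (use assms in \<open>auto simp: fy_def\<close>)
    thus "0 < fy k x a" "fy k x a \<le> x" by auto
  qed
  show "\<not> int k dvd fy k x a"
  proof (cases "int k dvd x")
    case True
    then obtain p where p: "x = int k * p" by blast
    have e: "fy k x a = int k * (p - 1) + (int a + 1)" using True p by (simp add: fy_def algebra_simps)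
    show ?thesis
    proof
      assume "int k dvd fy k x a"
      hence "int k dvd (int a + 1)" unfolding e by (simp add: dvd_add_right_iff)
      moreover have "0 < int a + 1" "int a + 1 < int k" using assms by auto
      ultimately show False using zdvd_imp_le by fastforce
    qed
  qed (simp add: fy_def)
qed

lemma f_inj:
  assumes "x > 0" "y > 0" "a < k - 1" "b < k - 1"
    "fy k x a = fy k y b" "fb k x a = fb k y b"
  shows "x = y \<and> a = b"
proof (cases "int k dvd x")
  case True
  note tx = True
  show ?thesis
  proof (cases "int k dvd y")
    case True
    obtain p where p: "x = int k * p" using tx by blast
    obtain q where q: "y = int k * q" using True by blast
    have "int k * (p - q) = int b - int a" using assms(5) tx True p q by (simp add: fy_def algebra_simps)
    moreover have "\<bar>int b - int a\<bar> < int k" using assms by auto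
    ultimately have "p - q = 0"
    proof (rule_tac ccontr)
      assume h: "int k * (p - q) = int b - int a" "\<bar>int b - int a\<bar> < int k" "p - q \<noteq> 0"
      have "int k * 1 \<le> int k * \<bar>p - q\<bar>" using h(3) by (intro mult_left_mono) auto
      also have "\<dots> = \<bar>int k * (p - q)\<bar>" by (simp add: abs_mult)
      finally show False using h(1,2) by simp
    qed
    then show ?thesis using p q assms(5) tx True by (simp add: fy_def)
  next
    case False
    then show ?thesis using assms tx by (simp add: fb_def)
  qed
next
  case False
  then show ?thesis using assms by (auto simp: fb_def fy_def split: if_splits)
qed



lemma coord_le_norm:
  assumes "i < length v"
  shows "real_of_int (v ! i) \<le> eucl_norm v"
proof -
  have "(real_of_int (v!i))\<^sup>2 \<le> (\<Sum>j<length v. (real_of_int (v ! j))\<^sup>2)"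
    by (rule member_le_sum[where f = "\<lambda>j. (real_of_int (v ! j))\<^sup>2"]) (use assms in auto)
  thus ?thesis unfolding eucl_norm_def by (rule real_le_rsqrt)
qed

lemma norm_mono:
  assumes "length w = length v" "\<forall>i<length v. 0 < w!i \<and> w!i \<le> v!i"
  shows "eucl_norm w \<le> eucl_norm v"
  unfolding eucl_norm_def
proof (intro real_sqrt_le_mono)
  show "(\<Sum>i<length w. (real_of_int (w ! i))\<^sup>2) \<le> (\<Sum>i<length v. (real_of_int (v ! i))\<^sup>2)"
    unfolding assms(1)
  proof (rule sum_mono)
    fix i assume "i \<in> {..<length v}"
    hence "0 < w!i" "w!i \<le> v!i" using assms(2) by auto
    thus "(real_of_int (w ! i))\<^sup>2 \<le> (real_of_int (v ! i))\<^sup>2" by (intro power_mono) auto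
  qed
qed

lemma finite_L: "finite (L d r)"
proof (rule finite_subset)
  show "L d r \<subseteq> {xs. set xs \<subseteq> {1..\<lceil>r\<rceil>} \<and> length xs = d}"
  proof
    fix v assume v: "v \<in> L d r"
    have "\<forall>x\<in>set v. x \<in> {1..\<lceil>r\<rceil>}"
    proof
      fix x assume "x \<in> set v"
      then obtain i where i: "i < length v" "x = v ! i" by (auto simp: in_set_conv_nth)
      have "real_of_int x \<le> r" using coord_le_norm[OF i(1)] v i by (auto simp: L_def)
      hence "x \<le> \<lceil>r\<rceil>" by linarith
      moreover have "x > 0" using v i by (auto simp: L_def)
      ultimately show "x \<in> {1..\<lceil>r\<rceil>}" by auto
    qed
    thus "v \<in> {xs. set xs \<subseteq> {1..\<lceil>r\<rceil>} \<and> length xs = d}" using v by (auto simp: L_def)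
  qed
  show "finite {xs. set xs \<subseteq> {1..\<lceil>r\<rceil>} \<and> length xs = d}"
    by (rule finite_lists_length_eq) simp
qed

lemma finite_Lk: "finite (Lk d k r)"
  by (rule finite_subset[OF _ finite_L[of d r]]) (auto simp: L_def Lk_def)

theorem lemma2p5:
  fixes d k :: nat and r :: real
  assumes "d > 0" and "k > 0" and "r > 0"
  shows "(k ^ d) * card (Lk d k r) \<ge> (k - 1) ^ d * card (L d r)"
proof -
  define A where "A = {as. set as \<subseteq> {..<k-1} \<and> length as = d}"
  define B where "B = {bs. set bs \<subseteq> {..<k} \<and> length bs = d}"
  define \<Phi> where "\<Phi> = (\<lambda>(v, as). (map2 (fy k) v as, map2 (fb k) v as))"
  have cA: "card A = (k-1)^d" unfolding A_def by (simp add: card_lists_length_eq)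
  have cB: "card B = k^d" unfolding B_def by (simp add: card_lists_length_eq)
  have fB: "finite B" unfolding B_def by (rule finite_lists_length_eq) simp
  have maps: "\<Phi> ` (L d r \<times> A) \<subseteq> Lk d k r \<times> B"
  proof (rule image_subsetI)
    fix p assume "p \<in> L d r \<times> A"
    then obtain v as where pv: "p = (v, as)" and v: "v \<in> L d r" and as: "as \<in> A" by auto
    have lv: "length v = d" and la: "length as = d" using v as by (auto simp: L_def A_def)
    have pos: "\<forall>i<d. 0 < v!i" using v by (auto simp: L_def)
    have al: "\<forall>i<d. as!i < k - 1"
    proof (intro allI impI)
      fix i assume "i < d"
      hence "as!i \<in> set as" using la by simp
      thus "as!i < k - 1" using as unfolding A_def by blast
    qed
    have n: "\<forall>i<d. map2 (fy k) v as ! i = fy k (v!i) (as!i) \<and> map2 (fb k) v as ! i = fb k (v!i) (as!i)"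
      using lv la by simp
    have P: "0 < fy k (v!i) (as!i) \<and> fy k (v!i) (as!i) \<le> v!i \<and> \<not> int k dvd fy k (v!i) (as!i)
       \<and> fb k (v!i) (as!i) < k" if "i < d" for i
      using fy_props[of "v!i" "as!i" k] pos al that by blast
    have "eucl_norm (map2 (fy k) v as) \<le> eucl_norm v"
    proof (rule norm_mono)
      show "length (map2 (fy k) v as) = length v" using lv la by simp
      show "\<forall>i<length v. 0 < map2 (fy k) v as ! i \<and> map2 (fy k) v as ! i \<le> v ! i"
        using n P lv by simp
    qed
    moreover have "length (map2 (fy k) v as) = d" using lv la by simp
    moreover have "\<forall>i<d. map2 (fy k) v as ! i > 0 \<and> \<not> (int k dvd map2 (fy k) v as ! i)"
      using n P by simp
    moreover have "eucl_norm v \<le> r" using v by (simp add: L_def)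
    ultimately have "map2 (fy k) v as \<in> Lk d k r" unfolding Lk_def by auto
    moreover have "map2 (fb k) v as \<in> B" unfolding B_def
    proof (intro CollectI conjI subsetI)
      fix b assume "b \<in> set (map2 (fb k) v as)"
      then obtain i where "i < d" "b = map2 (fb k) v as ! i"
        using lv la by (auto simp: in_set_conv_nth)
      thus "b \<in> {..<k}" using n P by simp
    qed (use lv la in simp)
    ultimately show "\<Phi> p \<in> Lk d k r \<times> B" by (simp add: \<Phi>_def pv)
  qed
  have inj: "inj_on \<Phi> (L d r \<times> A)"
  proof (rule inj_onI)
    fix p q assume pm: "p \<in> L d r \<times> A" and qm: "q \<in> L d r \<times> A" and eqpq: "\<Phi> p = \<Phi> q"
    obtain v as where pv: "p = (v, as)" and v: "v \<in> L d r" and as: "as \<in> A" using pm by auto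
    obtain w bs where qw: "q = (w, bs)" and w: "w \<in> L d r" and bs: "bs \<in> A" using qm by auto
    have eq: "\<Phi> (v, as) = \<Phi> (w, bs)" using eqpq pv qw by simp
    have l1: "length v = d" "length as = d" using v as unfolding L_def A_def by blast+
    have l2: "length w = d" "length bs = d" using w bs unfolding L_def A_def by blast+
    note l = l1 l2
    have pos1: "\<forall>i<d. 0 < v!i" using v unfolding L_def by blast
    have pos2: "\<forall>i<d. 0 < w!i" using w unfolding L_def by blast
    have al1: "\<forall>i<d. as!i < k - 1"
    proof (intro allI impI)
      fix i assume "i < d"
      hence "as!i \<in> set as" using l1 by simp
      thus "as!i < k - 1" using as unfolding A_def by blast
    qed
    have al2: "\<forall>i<d. bs!i < k - 1"
    proof (intro allI impI)
      fix i assume "i < d"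
      hence "bs!i \<in> set bs" using l2 by simp
      thus "bs!i < k - 1" using bs unfolding A_def by blast
    qed
    have e1: "map2 (fy k) v as = map2 (fy k) w bs" and e2: "map2 (fb k) v as = map2 (fb k) w bs"
      using eq by (auto simp: \<Phi>_def)
    have c: "v!i = w!i \<and> as!i = bs!i" if i: "i < d" for i
    proof -
      have "map2 (fy k) v as ! i = map2 (fy k) w bs ! i" "map2 (fb k) v as ! i = map2 (fb k) w bs ! i"
        using e1 e2 by auto
      hence "fy k (v!i) (as!i) = fy k (w!i) (bs!i)" "fb k (v!i) (as!i) = fb k (w!i) (bs!i)"
        using l i by auto
      thus ?thesis using f_inj[of "v!i" "w!i" "as!i" k "bs!i"] pos1 pos2 al1 al2 i by blast
    qed
    have "v = w" using c l by (auto intro: nth_equalityI)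
    moreover have "as = bs" using c l by (auto intro: nth_equalityI)
    ultimately show "p = q" using pv qw by simp
  qed
  have "card (L d r \<times> A) \<le> card (Lk d k r \<times> B)"
    by (rule card_inj_on_le[OF inj maps]) (use finite_Lk fB in auto)
  thus ?thesis using cA cB by (simp add: card_cartesian_product mult.commute)
qed

end
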